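(* Let $\Gamma$ be a finite vertex-transitive graph with $\mathrm{diam}(\Gamma)\in\{1,2\}$. Then $\Gamma$ admits no extended irregular dominating set.
   Context: Let $\Gamma=(V,E)$ be a finite simple undirected graph with graph distance $d$; $\mathrm{diam}(\Gamma)$ is the largest distance between two vertices. A vertex $v$ carrying a non-negative integer label $\ell$ dominates (covers) exactly the vertices $u$ with $d(u,v)=\ell$; a vertex labeled $0$ dominates only itself. An extended irregular dominating set is a set $S\subseteq V$ together with a labeling $\lambda:S\to\mathbb{Z}_{\ge 0}$ with distinct labels on distinct vertices, such that every vertex of $V$ is dominated by at least one vertex of $S$; it is assumed that some vertex of $S$ has label $0$. *)

theory Defs
  imports Main "HOL-Library.Extended_Nat"
begin

definition simple_graph :: "'a set \<Rightarrow> ('a \<Rightarrow> 'a \<Rightarrow> bool) \<Rightarrow> bool" where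
  "simple_graph V E \<longleftrightarrow> finite V \<and> (\<forall>u v. E u v \<longrightarrow> u \<in> V \<and> v \<in> V)
     \<and> (\<forall>u v. E u v \<longrightarrow> E v u) \<and> (\<forall>u. \<not> E u u)"

definition walk_of_len :: "('a \<Rightarrow> 'a \<Rightarrow> bool) \<Rightarrow> 'a \<Rightarrow> 'a \<Rightarrow> nat \<Rightarrow> bool" where
  "walk_of_len E u v n \<longleftrightarrow> (\<exists>xs. length xs = Suc n \<and> hd xs = u \<and> last xs = v
     \<and> (\<forall>i < n. E (xs ! i) (xs ! Suc i)))"

definition gdist :: "('a \<Rightarrow> 'a \<Rightarrow> bool) \<Rightarrow> 'a \<Rightarrow> 'a \<Rightarrow> enat" where
  "gdist E u v = (if \<exists>n. walk_of_len E u v n then enat (LEAST n. walk_of_len E u v n) else \<infinity>)"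

definition diam :: "'a set \<Rightarrow> ('a \<Rightarrow> 'a \<Rightarrow> bool) \<Rightarrow> enat" where
  "diam V E = Sup {gdist E u v | u v. u \<in> V \<and> v \<in> V}"

definition graph_automorphism :: "'a set \<Rightarrow> ('a \<Rightarrow> 'a \<Rightarrow> bool) \<Rightarrow> ('a \<Rightarrow> 'a) \<Rightarrow> bool" where
  "graph_automorphism V E f \<longleftrightarrow> bij_betw f V V \<and> (\<forall>x\<in>V. \<forall>y\<in>V. E x y \<longleftrightarrow> E (f x) (f y))"

definition vertex_transitive :: "'a set \<Rightarrow> ('a \<Rightarrow> 'a \<Rightarrow> bool) \<Rightarrow> bool" where
  "vertex_transitive V E \<longleftrightarrow> (\<forall>u\<in>V. \<forall>v\<in>V. \<exists>f. graph_automorphism V E f \<and> f u = v)"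

definition dominates :: "('a \<Rightarrow> 'a \<Rightarrow> bool) \<Rightarrow> 'a \<Rightarrow> nat \<Rightarrow> 'a \<Rightarrow> bool" where
  "dominates E v l u \<longleftrightarrow> gdist E u v = enat l"

definition ext_irregular_dominating :: "'a set \<Rightarrow> ('a \<Rightarrow> 'a \<Rightarrow> bool) \<Rightarrow> 'a set \<Rightarrow> ('a \<Rightarrow> nat) \<Rightarrow> bool" where
  "ext_irregular_dominating V E S lam \<longleftrightarrow> S \<subseteq> V \<and> inj_on lam S
     \<and> (\<forall>u\<in>V. \<exists>v\<in>S. dominates E v (lam v) u) \<and> (\<exists>v\<in>S. lam v = 0)"

end

theory Submission
  imports Defs
begin

lemma walk0: "walk_of_len E u u 0"
  unfolding walk_of_len_def by (rule exI[of _ "[u]"]) simp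

lemma gdist_self: "gdist E u u = 0"
proof -
  have "(LEAST n. walk_of_len E u u n) = 0" using walk0 by (metis Least_eq_0)
  then show ?thesis unfolding gdist_def using walk0[of E u] by (auto simp: zero_enat_def)
qed

lemma gdist_enat: assumes "gdist E u v = enat k" shows "walk_of_len E u v k"
proof -
  have ex: "\<exists>n. walk_of_len E u v n" using assms unfolding gdist_def by (auto split: if_splits)
  then have "k = (LEAST n. walk_of_len E u v n)" using assms unfolding gdist_def by auto
  then show ?thesis using ex by (metis LeastI)
qed

lemma gdist0: assumes "gdist E u v = 0" shows "u = v"
proof -
  have "walk_of_len E u v 0" using gdist_enat[of E u v 0] assms by (simp add: zero_enat_def)
  then obtain xs where "length xs = 1" "hd xs = u" "last xs = v" unfolding walk_of_len_def by auto
  then show ?thesis by (cases xs) auto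
qed

lemma gdist1: assumes "gdist E u v = 1" shows "E u v"
proof -
  have "walk_of_len E u v 1" using gdist_enat[of E u v 1] assms by (simp add: one_enat_def)
  then obtain xs where xs: "length xs = Suc (Suc 0)" "hd xs = u" "last xs = v" "E (xs!0) (xs!Suc 0)"
    unfolding walk_of_len_def by auto
  from xs(1) obtain a b where "xs = [a,b]"
    by (auto simp: length_Suc_conv)
  then show ?thesis using xs by auto
qed

lemma gdist_le1: assumes "E u v" shows "gdist E u v \<le> 1"
proof -
  have w: "walk_of_len E u v 1" unfolding walk_of_len_def
    by (rule exI[of _ "[u,v]"]) (simp add: assms)
  then have "(LEAST n. walk_of_len E u v n) \<le> 1" by (rule Least_le)
  then show ?thesis unfolding gdist_def using w by (auto simp: one_enat_def)
qed

lemma gdist_le_diam: "u \<in> V \<Longrightarrow> v \<in> V \<Longrightarrow> gdist E u v \<le> diam V E"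
  unfolding diam_def by (rule Sup_upper) blast

lemma diam_triv: assumes "\<forall>u\<in>V. \<forall>v\<in>V. u = v" shows "diam V E = 0"
proof -
  have "{gdist E u v | u v. u \<in> V \<and> v \<in> V} \<subseteq> {0}" using assms gdist_self by fastforce
  then have "\<forall>x\<in>{gdist E u v | u v. u \<in> V \<and> v \<in> V}. x \<le> 0" by auto
  then have "diam V E \<le> 0" unfolding diam_def Sup_le_iff .
  then show ?thesis by simp
qed

theorem proposition3p1:
  fixes V :: "'a set" and E :: "'a \<Rightarrow> 'a \<Rightarrow> bool"
  assumes "simple_graph V E"
    and "vertex_transitive V E"
    and "diam V E \<in> {1, 2}"
  shows "\<not> (\<exists>S lam. ext_irregular_dominating V E S lam)"
proof
  assume "\<exists>S lam. ext_irregular_dominating V E S lam"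
  then obtain S lam where SV: "S \<subseteq> V" and inj: "inj_on lam S"
    and cov: "\<forall>u\<in>V. \<exists>v\<in>S. gdist E u v = enat (lam v)" and z: "\<exists>v\<in>S. lam v = 0"
    unfolding ext_irregular_dominating_def dominates_def by blast
  have sym: "\<And>u v. E u v \<Longrightarrow> E v u" using assms(1) unfolding simple_graph_def by blast
  have d2: "diam V E \<le> 2" using assms(3) by (auto simp: one_enat_def numeral_eq_enat)
  have cov2: "\<exists>w\<in>S. gdist E u w = enat (lam w) \<and> lam w \<le> 2" if "u \<in> V" for u
  proof -
    have "\<exists>v\<in>S. gdist E u v = enat (lam v)" using cov that by (rule bspec)
    then obtain w where w: "w \<in> S" "gdist E u w = enat (lam w)" by (rule bexE)
    have "w \<in> V" using SV w by blast
    then have "gdist E u w \<le> diam V E" using gdist_le_diam[of u V w E] that by blast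
    then have "gdist E u w \<le> 2" using d2 by (rule order_trans)
    then have "lam w \<le> 2" using w by (simp add: numeral_eq_enat)
    then show ?thesis using w by blast
  qed
  have c0: "u = w" if "gdist E u w = enat 0" for u w using gdist0[of E u w] that by (simp add: zero_enat_def)
  have c1: "E u w" if "gdist E u w = enat 1" for u w using gdist1[of E u w] that by (simp add: one_enat_def)
  have injD: "x = y" if "x \<in> S" "y \<in> S" "lam x = lam y" for x y using inj that(3,1,2) by (rule inj_onD)
  obtain v0 where v0: "v0 \<in> S" "lam v0 = 0" using z by blast
  show False
  proof (cases "\<exists>x\<in>S. lam x = 1")
    case True
    then obtain x where x: "x \<in> S" "lam x = 1" by blast
    obtain w where w: "w \<in> S" "gdist E x w = enat (lam w)" "lam w \<le> 2" using cov2[of x] x SV by (metis subsetD)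
    have "lam w = 0 \<or> lam w = 1 \<or> lam w = 2" using w(3) by linarith
    moreover have "lam w \<noteq> 0"
    proof
      assume h: "lam w = 0"
      then have "x = w" using c0[of x w] w(2) by simp
      then show False using h x(2) by simp
    qed
    moreover have "lam w \<noteq> 1"
    proof
      assume h: "lam w = 1"
      then have "w = x" using injD[of w x] w(1) x by simp
      then have "gdist E x x = enat 1" using w(2) h by simp
      then show False using gdist_self[of E x] by (simp add: zero_enat_def)
    qed
    ultimately have lw: "lam w = 2" by blast
    obtain z where zz: "z \<in> S" "gdist E w z = enat (lam z)" "lam z \<le> 2" using cov2[of w] w SV by (metis subsetD)
    have "lam z = 0 \<or> lam z = 1 \<or> lam z = 2" using zz(3) by linarith
    moreover have "lam z \<noteq> 0"
    proof
      assume h: "lam z = 0"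
      then have "w = z" using c0[of w z] zz(2) by simp
      then show False using h lw by simp
    qed
    moreover have "lam z \<noteq> 2"
    proof
      assume h: "lam z = 2"
      then have "z = w" using injD[of z w] zz(1) w(1) lw by simp
      then have "gdist E w w = enat 2" using zz(2) h by simp
      then show False using gdist_self[of E w] by (simp add: zero_enat_def)
    qed
    moreover have "lam z \<noteq> 1"
    proof
      assume "lam z = 1"
      then have "z = x" using injD[of z x] zz(1) x by simp
      then have "E w x" using c1[of w z] zz(2) \<open>lam z = 1\<close> by simp
      then have "gdist E x w \<le> 1" using gdist_le1[of E x w] sym[of w x] by simp
      then show False using w lw by (simp add: one_enat_def numeral_eq_enat)
    qed
    ultimately show False by blast
  next
    case False
    have dn: "diam V E \<noteq> 0" using assms(3) by (auto simp: one_enat_def numeral_eq_enat zero_enat_def)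
    have "\<not> (\<forall>u\<in>V. \<forall>v\<in>V. u = v)"
    proof
      assume "\<forall>u\<in>V. \<forall>v\<in>V. u = v"
      then have "diam V E = 0" by (rule diam_triv)
      then show False using dn by simp
    qed
    then obtain u where u: "u \<in> V" "u \<noteq> v0" using v0 SV by blast
    obtain w where w: "w \<in> S" "gdist E u w = enat (lam w)" "lam w \<le> 2" using cov2[of u] u by metis
    have "lam w = 0 \<or> lam w = 1 \<or> lam w = 2" using w(3) by linarith
    moreover have "lam w \<noteq> 0"
    proof
      assume h: "lam w = 0"
      then have "u = w" using c0[of u w] w(2) by simp
      then have "w = v0" using injD[of w v0] v0 h w(1) by simp
      then show False using \<open>u = w\<close> u(2) by simp
    qed
    moreover have "lam w \<noteq> 1" using False w(1) by metis
    ultimately have lw: "lam w = 2" by blast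
    obtain z where zz: "z \<in> S" "gdist E w z = enat (lam z)" "lam z \<le> 2" using cov2[of w] w SV by (metis subsetD)
    have "lam z = 0 \<or> lam z = 1 \<or> lam z = 2" using zz(3) by linarith
    moreover have "lam z \<noteq> 0"
    proof
      assume h: "lam z = 0"
      then have "w = z" using c0[of w z] zz(2) by simp
      then show False using h lw by simp
    qed
    moreover have "lam z \<noteq> 2"
    proof
      assume h: "lam z = 2"
      then have "z = w" using injD[of z w] zz(1) w(1) lw by simp
      then have "gdist E w w = enat 2" using zz(2) h by simp
      then show False using gdist_self[of E w] by (simp add: zero_enat_def)
    qed
    moreover have "lam z \<noteq> 1" using False zz(1) by metis
    ultimately show False by blast
  qed
qed

end
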